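(* Let $m>0$, $\alpha>0$ and $\omega\ge 0$, and let $(\phi(t),\gamma(t),k(t))_{t\ge0}$ be a trajectory of the dynamical system \[ \frac{d\phi}{dt}=\gamma,\qquad \frac{d\gamma}{dt}=\frac{1}{m}\bigl(-\gamma+\omega-k\sin\phi\bigr),\qquad \frac{dk}{dt}=\alpha\cos\phi-k, \] with initial condition $(\phi(0),\gamma(0),k(0))=(\phi_0,\gamma_0,k_0)$, where $\phi$ is an angle (taken modulo $2\pi$ in $[-\pi,\pi)$) and $\gamma,k\in\mathbb{R}$. Then for every $\epsilon>0$ there exists a time $T_\epsilon\ge 0$ such that $|k(t)|\le \alpha+\epsilon$ and $|\gamma(t)|\le \omega+\alpha+\epsilon$ for all $t\ge T_\epsilon$.
   Context: This system describes the phase difference $\phi$, its derivative $\gamma$, and the (rescaled) adaptive coupling strength $k$ of two identical-mass Kuramoto oscillators with inertia and Hebbian learning; $m$ is the (rescaled) mass, $\alpha$ the learning enhancement factor, and $\omega$ the intrinsic-frequency difference (the paper assumes $\omega\ge 0$ throughout). *)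

theory Defs
  imports "HOL-Analysis.Analysis"
begin

end

theory Submission
  imports Defs
begin

lemma decay_bound:
  fixes f g :: "real \<Rightarrow> real" and c B T :: real
  assumes c: "c > 0" and T: "T > 0"
    and d: "\<And>t. t \<ge> T \<Longrightarrow> (f has_real_derivative c * (g t - f t)) (at t)"
    and gb: "\<And>t. t \<ge> T \<Longrightarrow> \<bar>g t\<bar> \<le> B"
    and t: "t \<ge> T"
  shows "\<bar>f t\<bar> \<le> B + (\<bar>f T\<bar> + B) * exp (- c * (t - T))"
proof -
  have B0: "B \<ge> 0" using gb[of T] by auto
  define u where "u s = exp (c * s) * (f s - B)" for s
  define v where "v s = exp (c * s) * (f s + B)" for s
  have du: "(u has_real_derivative c * exp (c * s) * (g s - B)) (at s)" if "s \<ge> T" for s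
    unfolding u_def
    by (rule derivative_eq_intros refl d that)+ (simp add: algebra_simps)
  have dv: "(v has_real_derivative c * exp (c * s) * (g s + B)) (at s)" if "s \<ge> T" for s
    unfolding v_def
    by (rule derivative_eq_intros refl d that)+ (simp add: algebra_simps)
  have "u t \<le> u T"
  proof (rule DERIV_nonpos_imp_nonincreasing[OF t])
    fix x assume "T \<le> x" "x \<le> t"
    have "g x - B \<le> 0" using gb[of x] \<open>T \<le> x\<close> by auto
    hence "c * exp (c * x) * (g x - B) \<le> 0" using c
      by (simp add: mult_nonneg_nonpos)
    then show "\<exists>y. DERIV u x :> y \<and> y \<le> 0" using du[OF \<open>T \<le> x\<close>] by blast
  qed
  moreover have "v T \<le> v t"
  proof (rule DERIV_nonneg_imp_nondecreasing[OF t])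
    fix x assume "T \<le> x" "x \<le> t"
    have "g x + B \<ge> 0" using gb[of x] \<open>T \<le> x\<close> by auto
    hence "c * exp (c * x) * (g x + B) \<ge> 0" using c by simp
    then show "\<exists>y. DERIV v x :> y \<and> y \<ge> 0" using dv[OF \<open>T \<le> x\<close>] by blast
  qed
  ultimately have 1: "exp (c*t) * (f t - B) \<le> exp (c*T) * (f T - B)"
    and 2: "exp (c*T) * (f T + B) \<le> exp (c*t) * (f t + B)"
    unfolding u_def v_def by auto
  have e: "exp (c*T) = exp (c*t) * exp (- c * (t - T))"
    by (simp add: exp_add[symmetric] algebra_simps)
  define E where "E = exp (- c * (t - T))"
  have Epos: "E > 0" unfolding E_def by simp
  have "exp (c*t) * (f t - B) \<le> exp (c*t) * (E * (f T - B))"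
    using 1 unfolding e E_def by (simp add: algebra_simps)
  hence a: "f t - B \<le> E * (f T - B)" by simp
  have "exp (c*t) * (E * (f T + B)) \<le> exp (c*t) * (f t + B)"
    using 2 unfolding e E_def by (simp add: algebra_simps)
  hence b: "E * (f T + B) \<le> f t + B" by simp
  have "E * (f T - B) \<le> E * (\<bar>f T\<bar> + B)" using Epos B0
    by (intro mult_left_mono) auto
  moreover have "E * (- (\<bar>f T\<bar> + B)) \<le> E * (f T + B)" using Epos B0
    by (intro mult_left_mono) auto
  ultimately show ?thesis using a b unfolding E_def[symmetric] by (simp add: abs_le_iff algebra_simps)
qed

lemma exp_small:
  fixes C c \<delta> :: real
  assumes "C \<ge> 0" "c > 0" "\<delta> > 0"
  shows "\<exists>S\<ge>0. \<forall>s\<ge>S. C * exp (- c * s) \<le> \<delta>"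
proof (intro exI[of _ "C / (c * \<delta>)"] conjI allI impI)
  show "C / (c * \<delta>) \<ge> 0" using assms by simp
  fix s assume s: "C / (c * \<delta>) \<le> s"
  have "C \<le> c * \<delta> * s" using s assms by (simp add: field_simps)
  also have "\<dots> \<le> \<delta> * exp (c * s)"
  proof -
    have "c * s \<le> exp (c * s)" using exp_ge_add_one_self[of "c * s"] by linarith
    then show ?thesis using assms by (simp add: mult.assoc)
  qed
  finally have "C \<le> \<delta> * exp (c * s)" .
  then show "C * exp (- c * s) \<le> \<delta>"
    by (simp add: exp_minus field_simps)
qed

theorem theorem1:
  fixes m \<alpha> \<omega> \<phi>\<^sub>0 \<gamma>\<^sub>0 k\<^sub>0 :: real
    and \<phi> \<gamma> k :: "real \<Rightarrow> real"
  assumes "m > 0" and "\<alpha> > 0" and "\<omega> \<ge> 0"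
    and "\<phi> 0 = \<phi>\<^sub>0" and "\<gamma> 0 = \<gamma>\<^sub>0" and "k 0 = k\<^sub>0"
    and "\<And>t. t \<ge> 0 \<Longrightarrow> (\<phi> has_real_derivative \<gamma> t) (at t within {0..})"
    and "\<And>t. t \<ge> 0 \<Longrightarrow>
           (\<gamma> has_real_derivative (1 / m) * (- \<gamma> t + \<omega> - k t * sin (\<phi> t))) (at t within {0..})"
    and "\<And>t. t \<ge> 0 \<Longrightarrow> (k has_real_derivative \<alpha> * cos (\<phi> t) - k t) (at t within {0..})"
  shows "\<forall>\<epsilon>>0. \<exists>T\<ge>0. \<forall>t\<ge>T. \<bar>k t\<bar> \<le> \<alpha> + \<epsilon> \<and> \<bar>\<gamma> t\<bar> \<le> \<omega> + \<alpha> + \<epsilon>"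
proof (intro allI impI)
  fix \<epsilon> :: real assume ep: "\<epsilon> > 0"
  have at: "at t within {0..} = at t" if "t > 0" for t :: real
    using that by (intro at_within_interior) simp
  have dk: "(k has_real_derivative 1 * ((\<alpha> * cos (\<phi> t)) - k t)) (at t)" if "t \<ge> 1" for t
    using assms(9)[of t] at[of t] that by simp
  have kb: "\<bar>k t\<bar> \<le> \<alpha> + (\<bar>k 1\<bar> + \<alpha>) * exp (- 1 * (t - 1))" if "t \<ge> 1" for t
    by (rule decay_bound[where g="\<lambda>t. \<alpha> * cos (\<phi> t)"]) (use dk that assms(2) in \<open>auto simp: abs_mult\<close>)
  obtain S1 where S1: "S1 \<ge> 0" "\<And>s. s \<ge> S1 \<Longrightarrow> (\<bar>k 1\<bar> + \<alpha>) * exp (- 1 * s) \<le> \<epsilon>/2"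
    using exp_small[of "\<bar>k 1\<bar> + \<alpha>" 1 "\<epsilon>/2"] assms(2) ep by auto
  define T1 where "T1 = S1 + 1"
  have kb2: "\<bar>k t\<bar> \<le> \<alpha> + \<epsilon>/2" if "t \<ge> T1" for t
    using kb[of t] S1(2)[of "t - 1"] that S1(1) unfolding T1_def by auto
  define B where "B = \<omega> + \<alpha> + \<epsilon>/2"
  have dg: "(\<gamma> has_real_derivative (1/m) * ((\<omega> - k t * sin (\<phi> t)) - \<gamma> t)) (at t)" if "t \<ge> T1" for t
    using assms(8)[of t] at[of t] that S1(1) unfolding T1_def by (simp add: algebra_simps)
  have gbound: "\<bar>\<omega> - k t * sin (\<phi> t)\<bar> \<le> B" if "t \<ge> T1" for t
  proof -
    have "\<bar>k t * sin (\<phi> t)\<bar> \<le> \<bar>k t\<bar>"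
      by (simp add: abs_mult mult_left_le)
    then show ?thesis using kb2[OF that] assms(3) unfolding B_def by linarith
  qed
  have gb: "\<bar>\<gamma> t\<bar> \<le> B + (\<bar>\<gamma> T1\<bar> + B) * exp (- (1/m) * (t - T1))" if "t \<ge> T1" for t
    by (rule decay_bound[where g="\<lambda>t. \<omega> - k t * sin (\<phi> t)"])
      (use dg gbound that assms(1) S1(1) in \<open>auto simp: T1_def\<close>)
  have B0: "B \<ge> 0" unfolding B_def using assms ep by simp
  obtain S2 where S2: "S2 \<ge> 0" "\<And>s. s \<ge> S2 \<Longrightarrow> (\<bar>\<gamma> T1\<bar> + B) * exp (- (1/m) * s) \<le> \<epsilon>/2"
    using exp_small[of "\<bar>\<gamma> T1\<bar> + B" "1/m" "\<epsilon>/2"] assms(1) ep B0 by auto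
  show "\<exists>T\<ge>0. \<forall>t\<ge>T. \<bar>k t\<bar> \<le> \<alpha> + \<epsilon> \<and> \<bar>\<gamma> t\<bar> \<le> \<omega> + \<alpha> + \<epsilon>"
  proof (intro exI[of _ "T1 + S2"] conjI allI impI)
    show "T1 + S2 \<ge> 0" using S1 S2 unfolding T1_def by simp
    fix t assume t: "T1 + S2 \<le> t"
    show "\<bar>k t\<bar> \<le> \<alpha> + \<epsilon>" using kb2[of t] t S2(1) ep by auto
    show "\<bar>\<gamma> t\<bar> \<le> \<omega> + \<alpha> + \<epsilon>"
      using gb[of t] S2(2)[of "t - T1"] t S2(1) unfolding B_def by auto
  qed
qed

end
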